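(* Let $A$ be a finite abelian group, let $H$ be a subgroup of $A$, let $A_2$ be the Sylow $2$-subgroup of $A$ and $H_2$ the Sylow $2$-subgroup of $H$. If $\Gamma_{A,H}$ admits a perfect code, then $\Gamma_{A_2,H_2}$ admits a perfect code.
   Context: Abelian groups are written additively with identity $0$. For a subgroup $H$ of a finite abelian group $A$, the subgroup sum graph $\Gamma_{A,H}$ is the simple undirected graph with vertex set $A$ in which distinct vertices $x,y$ are adjacent if and only if $x+y\in H\setminus\{0\}$. A perfect code in a graph is a set $C$ of vertices that is independent and such that every vertex not in $C$ is adjacent to exactly one vertex of $C$. *)

theory Defs
  imports "HOL-Algebra.Algebra"
begin

text \<open>The abelian group A is written multiplicatively (HOL-Algebra comm_group);
  the group operation plays the role of the paper's addition, the unit that of 0.\<close>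

definition sum_adj :: "('a, 'b) monoid_scheme \<Rightarrow> 'a set \<Rightarrow> 'a \<Rightarrow> 'a \<Rightarrow> bool" where
  "sum_adj G H x y \<longleftrightarrow> x \<noteq> y \<and> x \<otimes>\<^bsub>G\<^esub> y \<in> H \<and> x \<otimes>\<^bsub>G\<^esub> y \<noteq> \<one>\<^bsub>G\<^esub>"

definition perfect_code :: "'a set \<Rightarrow> ('a \<Rightarrow> 'a \<Rightarrow> bool) \<Rightarrow> 'a set \<Rightarrow> bool" where
  "perfect_code V adj C \<longleftrightarrow> C \<subseteq> V \<and> (\<forall>x\<in>C. \<forall>y\<in>C. \<not> adj x y)
     \<and> (\<forall>v\<in>V - C. \<exists>!c. c \<in> C \<and> adj v c)"

definition sum_graph_has_perfect_code :: "('a, 'b) monoid_scheme \<Rightarrow> 'a set \<Rightarrow> 'a set \<Rightarrow> bool" where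
  "sum_graph_has_perfect_code G V H \<longleftrightarrow> (\<exists>C. perfect_code V (sum_adj G H) C)"

definition sylow_subgroup :: "('a, 'b) monoid_scheme \<Rightarrow> nat \<Rightarrow> 'a set \<Rightarrow> 'a set \<Rightarrow> bool" where
  "sylow_subgroup G p S P \<longleftrightarrow> subgroup P G \<and> P \<subseteq> S \<and> card P = p ^ multiplicity p (card S)"

end

theory Submission
  imports Defs
begin

lemma sylow_mem:
  assumes cg: "comm_group G" and S: "subgroup S G" and fin: "finite S"
    and P: "subgroup P G" "P \<subseteq> S" "card P = 2 ^ multiplicity 2 (card S)"
    and h: "h \<in> S" "h [^]\<^bsub>G\<^esub> (2^n::nat) = \<one>\<^bsub>G\<^esub>"
  shows "h \<in> P"
proof -
  interpret comm_group G by fact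
  define G' where "G' = G\<lparr>carrier := S\<rparr>"
  have gG': "group G'" unfolding G'_def using S subgroup.subgroup_is_group is_group by blast
  have cG': "comm_group G'"
    by (rule group.group_comm_groupI[OF gG']) (use S in \<open>auto simp: G'_def m_comm subgroup.mem_carrier\<close>)
  have PG': "subgroup P G'" unfolding G'_def using subgroup_incl[OF P(1) S P(2)] .
  have nP: "P \<lhd> G'" using comm_group.subgroup_imp_normal[OF cG' PG'] .
  have lag: "card (rcosets\<^bsub>G'\<^esub> P) * card P = card S"
    using group.lagrange[OF gG' PG'] by (simp add: order_def G'_def)
  define m where "m = card (rcosets\<^bsub>G'\<^esub> P)"
  have ord: "order (G' Mod P) = m" by (simp add: order_def FactGroup_def m_def)
  have gQ: "group (G' Mod P)" using normal.factorgroup_is_group[OF nP] .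
  have hG': "h \<in> carrier G'" using h by (simp add: G'_def)
  have "P #>\<^bsub>G'\<^esub> h \<in> carrier (G' Mod P)"
    using hG' by (auto simp: FactGroup_def RCOSETS_def)
  hence "(P #>\<^bsub>G'\<^esub> h) [^]\<^bsub>G' Mod P\<^esub> m = P"
    using group.pow_order_eq_1[OF gQ] ord by fastforce
  hence "P #>\<^bsub>G'\<^esub> (h [^]\<^bsub>G'\<^esub> m) = P"
    using normal.FactGroup_pow[OF nP hG'] by (simp add: FactGroup_def)
  moreover have "h [^]\<^bsub>G'\<^esub> m \<in> carrier G'" using hG' monoid.nat_pow_closed[OF group.is_monoid[OF gG']] by blast
  ultimately have hm: "h [^]\<^bsub>G'\<^esub> m \<in> P"
    using group.rcos_self[OF gG' _ PG'] by metis
  have hmG: "h [^]\<^bsub>G\<^esub> m \<in> P" using hm nat_pow_consistent[of h m S] by (simp add: G'_def)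
  have S0: "card S \<noteq> 0" using fin subgroup.one_closed[OF S] card_0_eq by blast
  have mdef: "m = card S div 2 ^ multiplicity 2 (card S)"
  proof -
    have cP: "card P > 0" using P(3) by simp
    have "m = card S div card P" unfolding m_def using cP by (simp add: lag[symmetric])
    thus ?thesis using P(3) by simp
  qed
  have modd: "\<not> 2 dvd m" unfolding mdef
    by (rule multiplicity_decompose) (use S0 in auto)
  have m0: "m \<noteq> 0" using modd by (metis dvd_0_right)
  obtain d x y where d: "d dvd m" "d dvd 2^n" "m * x = 2^n * y + d"
    using bezout_add_strong_nat[OF m0, of "2^n"] by blast
  have "coprime m (2^n)" using modd by simp
  hence d1: "d = 1" using d coprime_common_divisor_nat by blast
  have hc: "h \<in> carrier G" using subgroup.mem_carrier[OF S h(1)] .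
  have mx: "m * x = 2^n * y + 1" using d(3) d1 by simp
  have "h [^]\<^bsub>G\<^esub> (m * x) = h [^]\<^bsub>G\<^esub> (2^n * y + 1)" by (simp only: mx)
  also have "\<dots> = h [^]\<^bsub>G\<^esub> (2^n * y) \<otimes>\<^bsub>G\<^esub> h [^]\<^bsub>G\<^esub> (1::nat)"
    using hc by (rule nat_pow_mult[symmetric])
  also have "h [^]\<^bsub>G\<^esub> (2^n * y) = (h [^]\<^bsub>G\<^esub> (2^n::nat)) [^]\<^bsub>G\<^esub> y"
    using hc by (rule nat_pow_pow[symmetric])
  also have "(h [^]\<^bsub>G\<^esub> (2^n::nat)) [^]\<^bsub>G\<^esub> y = \<one>\<^bsub>G\<^esub>" using h(2) by simp
  finally have hx: "h [^]\<^bsub>G\<^esub> (m * x) = h" using hc by simp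
  have "h = (h [^]\<^bsub>G\<^esub> m) [^]\<^bsub>G\<^esub> x" using hc hx by (simp add: nat_pow_pow)
  moreover have "(h [^]\<^bsub>G\<^esub> m) [^]\<^bsub>G\<^esub> x \<in> P"
  proof -
    have gP: "group (G\<lparr>carrier := P\<rparr>)" using subgroup.subgroup_is_group[OF P(1) is_group] .
    have "(h [^]\<^bsub>G\<^esub> m) [^]\<^bsub>G\<lparr>carrier := P\<rparr>\<^esub> x \<in> carrier (G\<lparr>carrier := P\<rparr>)"
      using monoid.nat_pow_closed[OF group.is_monoid[OF gP]] hmG by simp
    thus ?thesis using nat_pow_consistent[of "h [^]\<^bsub>G\<^esub> m" x P] by simp
  qed
  ultimately show ?thesis by simp
qed


context comm_group begin
lemma c1: "x \<in> carrier G \<Longrightarrow> y \<in> carrier G \<Longrightarrow> x \<otimes> (y \<otimes> inv x) = y"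
  by (metis inv_closed m_comm r_inv r_one m_assoc)
lemma c2: "x \<in> carrier G \<Longrightarrow> y \<in> carrier G \<Longrightarrow> z \<in> carrier G \<Longrightarrow> x \<otimes> (y \<otimes> (z \<otimes> inv x)) = y \<otimes> z"
  by (metis c1 m_assoc m_closed inv_closed)
lemma c3: "x \<in> carrier G \<Longrightarrow> y \<in> carrier G \<Longrightarrow> x \<otimes> (inv x \<otimes> y) = y"
  by (metis inv_closed r_inv l_one m_assoc)
lemma c4: "x \<in> carrier G \<Longrightarrow> y \<in> carrier G \<Longrightarrow> z \<in> carrier G \<Longrightarrow> x \<otimes> (y \<otimes> (inv x \<otimes> z)) = y \<otimes> z"
  by (metis c3 m_lcomm inv_closed m_closed)
lemmas canc = c1 c2 c3 c4

lemma memK: "subgroup K G \<Longrightarrow> t \<in> carrier G \<Longrightarrow> u \<in> K \<Longrightarrow> w \<in> K \<Longrightarrow> t = u \<otimes> w \<Longrightarrow> t \<in> K"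
  by (simp add: subgroup.m_closed)
lemma memKi: "subgroup K G \<Longrightarrow> t \<in> carrier G \<Longrightarrow> u \<in> K \<Longrightarrow> w \<in> K \<Longrightarrow> t = inv u \<otimes> w \<Longrightarrow> t \<in> K"
  by (simp add: subgroup.m_closed subgroup.m_inv_closed)
lemma memKi2: "subgroup K G \<Longrightarrow> t \<in> carrier G \<Longrightarrow> u \<in> K \<Longrightarrow> w \<in> K \<Longrightarrow> t = u \<otimes> inv w \<Longrightarrow> t \<in> K"
  by (simp add: subgroup.m_closed subgroup.m_inv_closed)

lemma nec:
  assumes H: "subgroup H G" and pc: "perfect_code (carrier G) (sum_adj G H) C"
    and c3: "3 \<le> card H" and a: "a \<in> carrier G" "a \<otimes> a \<in> H"
  shows "\<exists>x\<in>carrier G. a \<otimes> x \<in> H \<and> x \<otimes> x = \<one>"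
proof (rule ccontr)
  assume no: "\<not> ?thesis"
  have Hc: "\<And>x. x \<in> H \<Longrightarrow> x \<in> carrier G" using subgroup.mem_carrier[OF H] .
  define Xs where "Xs = {y \<in> carrier G. a \<otimes> y \<in> H}"
  have Xc: "\<And>y. y \<in> Xs \<Longrightarrow> y \<in> carrier G" by (simp add: Xs_def)
  have Xmul: "y \<otimes> z \<in> H" if "y \<in> Xs" "z \<in> Xs" for y z
  proof -
    have yc: "y \<in> carrier G" "z \<in> carrier G" "a \<otimes> y \<in> H" "a \<otimes> z \<in> H" using that by (auto simp: Xs_def)
    have eq: "y \<otimes> z = ((a \<otimes> y) \<otimes> (a \<otimes> z)) \<otimes> inv (a \<otimes> a)"
      using yc a by (simp add: m_ac canc inv_mult)
    show ?thesis by (rule memKi2[OF H _ subgroup.m_closed[OF H yc(3,4)] a(2) eq]) (use yc in simp)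
  qed
  have Xinv: "inv y \<in> Xs" if "y \<in> Xs" for y
  proof -
    have yc: "y \<in> carrier G" "a \<otimes> y \<in> H" using that by (auto simp: Xs_def)
    have eq: "a \<otimes> inv y = inv (a \<otimes> y) \<otimes> (a \<otimes> a)"
      using yc a by (simp add: m_ac canc inv_mult)
    have "a \<otimes> inv y \<in> H" by (rule memKi[OF H _ yc(2) a(2) eq]) (use yc a in simp)
    thus ?thesis using yc by (simp add: Xs_def)
  qed
  have Xadj: "c \<in> Xs" if "v \<in> Xs" "c \<in> carrier G" "v \<otimes> c \<in> H" for v c
  proof -
    have yc: "v \<in> carrier G" "a \<otimes> v \<in> H" using that by (auto simp: Xs_def)
    have eq: "a \<otimes> c = inv (a \<otimes> v) \<otimes> ((a \<otimes> a) \<otimes> (v \<otimes> c))"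
      using yc a that(2) by (simp add: m_ac canc inv_mult)
    have "a \<otimes> c \<in> H" by (rule memKi[OF H _ yc(2) subgroup.m_closed[OF H a(2) that(3)] eq]) (use yc a that in simp)
    thus ?thesis using that by (simp add: Xs_def)
  qed
  have Xsq: "y \<otimes> y \<noteq> \<one>" if "y \<in> Xs" for y using no that by (auto simp: Xs_def)
  from pc have Cc: "C \<subseteq> carrier G" and ind: "\<And>x y. x \<in> C \<Longrightarrow> y \<in> C \<Longrightarrow> \<not> sum_adj G H x y"
    and dom: "\<And>v. v \<in> carrier G - C \<Longrightarrow> \<exists>!c. c \<in> C \<and> sum_adj G H v c"
    unfolding perfect_code_def by auto
  have v0: "inv a \<in> Xs" using a H by (simp add: Xs_def subgroup.one_closed)
  obtain c where c: "c \<in> C" "c \<in> Xs"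
  proof (cases "inv a \<in> C")
    case True thus ?thesis using that v0 by blast
  next
    case False
    then obtain c where "c \<in> C" "sum_adj G H (inv a) c" using dom[of "inv a"] a by auto
    thus ?thesis using that Xadj[OF v0] Cc by (auto simp: sum_adj_def)
  qed
  have cc: "c \<in> carrier G" using c Xc by blast
  have ic: "inv c \<in> Xs" using Xinv c by blast
  have cne: "c \<noteq> inv c" using Xsq[OF c(2)] cc by (metis r_inv)
  have "card {a \<otimes> c, a \<otimes> inv c} \<le> 2" by (rule card_insert_le_m1) auto
  hence "H - {a \<otimes> c, a \<otimes> inv c} \<noteq> {}" using c3 by (metis Diff_eq_empty_iff card_mono finite_insert finite.emptyI not_less_eq_eq numeral_3_eq_3 numeral_2_eq_2 le_trans)
  then obtain k where k: "k \<in> H" "k \<noteq> a \<otimes> c" "k \<noteq> a \<otimes> inv c" by blast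
  define y where "y = inv a \<otimes> k"
  have yc: "y \<in> carrier G" using k Hc a by (simp add: y_def)
  have ay: "a \<otimes> y = k" using a Hc[OF k(1)] by (simp add: y_def canc)
  have yX: "y \<in> Xs" using yc ay k by (simp add: Xs_def)
  have ync: "y \<noteq> c" using ay k by auto
  have ynic: "y \<noteq> inv c" using ay k by auto
  have adjc: "sum_adj G H y c"
    using ync Xmul[OF yX c(2)] ynic cc yc by (auto simp: sum_adj_def inv_char dest: inv_equality)
  have yC: "y \<notin> C"
  proof
    assume "y \<in> C"
    from ind[OF this c(1)] adjc show False by simp
  qed
  show False
  proof (cases "inv c \<in> C")
    case True
    have adjic: "sum_adj G H y (inv c)"
      using ynic Xmul[OF yX ic] ync cc yc by (auto simp: sum_adj_def dest: inv_equality)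
    have "y \<in> carrier G - C" using yc yC by blast
    from dom[OF this] have "\<And>c1 c2. c1 \<in> C \<Longrightarrow> sum_adj G H y c1 \<Longrightarrow> c2 \<in> C \<Longrightarrow> sum_adj G H y c2 \<Longrightarrow> c1 = c2"
      by (metis (no_types, lifting))
    from this[OF c(1) adjc True adjic] cne show False by simp
  next
    case False
    then obtain c' where c': "c' \<in> C" "sum_adj G H (inv c) c'" using dom[of "inv c"] cc by auto
    have c'c: "c' \<in> carrier G" using c' Cc by blast
    have "c' \<in> Xs" using Xadj[OF ic c'c] c' by (simp add: sum_adj_def)
    have "c' \<noteq> c" using c' cc by (auto simp: sum_adj_def)
    moreover have "c' \<noteq> inv c" using c' by (auto simp: sum_adj_def)
    ultimately have "sum_adj G H c' c"
      using Xmul[OF \<open>c' \<in> Xs\<close> c(2)] cc c'c by (auto simp: sum_adj_def dest: inv_equality)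
    thus False using ind[OF c'(1) c(1)] by blast
  qed
qed

lemma suff:
  assumes V: "subgroup V G" and K: "subgroup K G" and finK: "finite K"
    and hyp: "card K \<le> 2 \<or> (\<forall>a\<in>V. a \<otimes> a \<in> K \<longrightarrow> (\<exists>x\<in>V. a \<otimes> x \<in> K \<and> x \<otimes> x = \<one>))"
  shows "\<exists>C. perfect_code V (sum_adj G K) C"
proof -
  have Vc: "\<And>x. x \<in> V \<Longrightarrow> x \<in> carrier G" using subgroup.mem_carrier[OF V] .
  have Kc: "\<And>x. x \<in> K \<Longrightarrow> x \<in> carrier G" using subgroup.mem_carrier[OF K] .
  have Vi: "\<And>x. x \<in> V \<Longrightarrow> inv x \<in> V" using subgroup.m_inv_closed[OF V] .
  have Ki: "\<And>x. x \<in> K \<Longrightarrow> inv x \<in> K" using subgroup.m_inv_closed[OF K] .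
  have Km: "\<And>x y. x \<in> K \<Longrightarrow> y \<in> K \<Longrightarrow> x \<otimes> y \<in> K" using subgroup.m_closed[OF K] .
  define comp where "comp v = {y \<in> V. inv v \<otimes> y \<in> K \<or> v \<otimes> y \<in> K}" for v
  define d where "d v = (if \<exists>y\<in>comp v. y \<otimes> y = \<one> then SOME y. y \<in> comp v \<and> y \<otimes> y = \<one> else SOME y. y \<in> comp v)" for v
  define C where "C = {y. \<exists>v\<in>V. y = d v \<or> y = inv (d v)}"
  have F0: "v \<in> comp v" if "v \<in> V" for v
    using that Vc subgroup.one_closed[OF K] by (simp add: comp_def)
  have F1: "d v \<in> comp v" if "v \<in> V" for v
  proof (cases "\<exists>y\<in>comp v. y \<otimes> y = \<one>")
    case True
    hence "\<exists>y. y \<in> comp v \<and> y \<otimes> y = \<one>" by blast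
    from someI_ex[OF this] True show ?thesis by (simp add: d_def)
  next
    case False
    have "\<exists>y. y \<in> comp v" using F0[OF that] by blast
    from someI_ex[OF this] False show ?thesis by (simp add: d_def)
  qed
  have compV: "\<And>v y. y \<in> comp v \<Longrightarrow> y \<in> V" by (simp add: comp_def)
  have F2: "v \<in> comp w" if "v \<in> V" "w \<in> comp v" for v w
  proof -
    have vc: "v \<in> carrier G" "w \<in> carrier G" "w \<in> V" using that Vc compV by auto
    have "inv v \<otimes> w \<in> K \<or> v \<otimes> w \<in> K" using that by (simp add: comp_def)
    moreover have "inv w \<otimes> v \<in> K" if "inv v \<otimes> w \<in> K"
    proof -
      have "inv w \<otimes> v = inv (inv v \<otimes> w)" using vc by (simp add: inv_mult m_ac)
      thus ?thesis using Ki[OF that] by simp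
    qed
    moreover have "w \<otimes> v \<in> K" if "v \<otimes> w \<in> K" using that vc by (simp add: m_comm)
    ultimately show ?thesis using vc that by (auto simp: comp_def)
  qed
  have F3: "y \<in> comp v" if "v \<in> V" "w \<in> comp v" "y \<in> comp w" for v w y
  proof -
    have vc: "v \<in> carrier G" "w \<in> carrier G" "y \<in> carrier G" "y \<in> V" using that Vc compV by auto
    have e1: "inv v \<otimes> y = (inv v \<otimes> w) \<otimes> (inv w \<otimes> y)" using vc by (simp add: m_ac canc)
    have e2: "v \<otimes> y = inv (inv v \<otimes> w) \<otimes> (w \<otimes> y)" using vc by (simp add: m_ac canc inv_mult)
    have e3: "v \<otimes> y = (v \<otimes> w) \<otimes> (inv w \<otimes> y)" using vc by (simp add: m_ac canc)
    have e4: "inv v \<otimes> y = inv (v \<otimes> w) \<otimes> (w \<otimes> y)" using vc by (simp add: m_ac canc inv_mult)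
    have "inv v \<otimes> w \<in> K \<or> v \<otimes> w \<in> K" "inv w \<otimes> y \<in> K \<or> w \<otimes> y \<in> K" using that by (auto simp: comp_def)
    hence "inv v \<otimes> y \<in> K \<or> v \<otimes> y \<in> K"
      using e1 e2 e3 e4 Km Ki by metis
    thus ?thesis using vc by (simp add: comp_def)
  qed
  have F4: "comp w = comp v" if "v \<in> V" "w \<in> comp v" for v w
  proof -
    have wV: "w \<in> V" using that compV by blast
    show ?thesis using F3[OF that(1) that(2)] F3[OF wV F2[OF that]] by blast
  qed
  have F5: "inv y \<in> comp v" if "v \<in> V" "y \<in> comp v" for v y
  proof -
    have vc: "v \<in> carrier G" "y \<in> carrier G" "y \<in> V" using that Vc compV by auto
    have e1: "inv v \<otimes> inv y = inv (v \<otimes> y)" using vc by (simp add: inv_mult m_ac)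
    have e2: "v \<otimes> inv y = inv (inv v \<otimes> y)" using vc by (simp add: inv_mult m_ac)
    have "inv v \<otimes> y \<in> K \<or> v \<otimes> y \<in> K" using that by (simp add: comp_def)
    hence "inv v \<otimes> inv y \<in> K \<or> v \<otimes> inv y \<in> K" using e1 e2 Ki by metis
    thus ?thesis using vc Vi by (simp add: comp_def)
  qed
  have F6: "d w = d v" if "comp w = comp v" for v w
    using that by (simp add: d_def)
  have dV: "d v \<in> V" if "v \<in> V" for v using F1[OF that] compV by blast
  have CV: "C \<subseteq> V" using dV Vi by (auto simp: C_def)
  have F7: "c = d v \<or> c = inv (d v)" if "c \<in> C" "c \<in> comp v" "v \<in> V" for c v
  proof -
    obtain w where w: "w \<in> V" "c = d w \<or> c = inv (d w)" using \<open>c \<in> C\<close> unfolding C_def by blast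
    have cV: "c \<in> V" using that compV by blast
    have "comp w = comp v"
    proof (cases "c = d w")
      case True
      hence cw: "c \<in> comp w" using F1[OF w(1)] by simp
      show ?thesis using F4[OF w(1) cw] F4[OF that(3) that(2)] by simp
    next
      case False
      hence ci: "c = inv (d w)" using w by blast
      have dwc: "d w \<in> carrier G" using dV[OF w(1)] Vc by blast
      have "inv c \<in> comp w" using F1[OF w(1)] ci dwc by simp
      moreover have "inv c \<in> comp v" using F5[OF that(3) that(2)] .
      ultimately show ?thesis using F4[OF w(1)] F4[OF that(3)] by metis
    qed
    thus ?thesis using w F6 by metis
  qed
  have adjcomp: "c \<in> comp v" if "v \<in> V" "c \<in> V" "sum_adj G K v c" for v c
    using that by (simp add: comp_def sum_adj_def)
  have indep: "\<not> sum_adj G K c1 c2" if "c1 \<in> C" "c2 \<in> C" for c1 c2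
  proof
    assume adj: "sum_adj G K c1 c2"
    have c1V: "c1 \<in> V" "c2 \<in> V" using that CV by auto
    have "c2 \<in> comp c1" using adjcomp[OF c1V adj] .
    hence A: "c2 = d c1 \<or> c2 = inv (d c1)" using F7[OF that(2) _ c1V(1)] by blast
    have B: "c1 = d c1 \<or> c1 = inv (d c1)" using F7[OF that(1) F0[OF c1V(1)] c1V(1)] .
    have Dc: "d c1 \<in> carrier G" using dV[OF c1V(1)] Vc by blast
    have "c1 \<noteq> c2" "c1 \<otimes> c2 \<noteq> \<one>" using adj by (auto simp: sum_adj_def)
    thus False using A B Dc by (metis l_inv r_inv)
  qed
  have domi: "\<exists>!c. c \<in> C \<and> sum_adj G K v c" if vV: "v \<in> V" "v \<notin> C" for v
  proof -
    define D where "D = d v"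
    have DC: "D \<in> C" "inv D \<in> C" using vV(1) by (auto simp: C_def D_def)
    have Dcomp: "D \<in> comp v" using F1[OF vV(1)] by (simp add: D_def)
    have DV: "D \<in> V" using Dcomp compV by blast
    have vc: "v \<in> carrier G" "D \<in> carrier G" using vV DV Vc by auto
    have vnD: "v \<noteq> D" "v \<noteq> inv D" using vV DC by auto
    have cand: "c = D \<or> c = inv D" if "c \<in> C" "sum_adj G K v c" for c
      using F7[OF that(1) adjcomp[OF vV(1) _ that(2)] vV(1)] that(1) CV by (auto simp: D_def)
    have ex1I: "\<exists>!c. c \<in> C \<and> sum_adj G K v c" if "c0 \<in> C" "sum_adj G K v c0"
      "\<And>c. c \<in> C \<Longrightarrow> sum_adj G K v c \<Longrightarrow> c = c0" for c0
      using that by blast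
    have vDne: "v \<otimes> D \<noteq> \<one>"
    proof
      assume "v \<otimes> D = \<one>" hence "v = inv D" using vc by (metis inv_equality)
      thus False using vnD by simp
    qed
    have vDine: "v \<otimes> inv D \<noteq> \<one>"
    proof
      assume "v \<otimes> inv D = \<one>" hence "v = inv (inv D)" using vc by (metis inv_equality inv_closed)
      thus False using vnD vc by simp
    qed
    have Dmem: "inv v \<otimes> D \<in> K \<or> v \<otimes> D \<in> K" using Dcomp by (simp add: comp_def)
    show ?thesis
    proof (cases "D \<otimes> D = \<one>")
      case True
      have iD: "inv D = D" using True vc by (metis inv_equality)
      have "v \<otimes> D \<in> K"
      proof (cases "v \<otimes> D \<in> K")
        case False
        hence "inv v \<otimes> D \<in> K" using Dmem by blast
        moreover have "v \<otimes> D = inv (inv v \<otimes> D)" using vc iD by (simp add: inv_mult m_ac)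
        ultimately show ?thesis using Ki by metis
      qed
      hence adj: "sum_adj G K v D" using vnD vDne by (simp add: sum_adj_def)
      show ?thesis by (rule ex1I[OF DC(1) adj]) (use cand iD in blast)
    next
      case False
      have nosq: "\<not> (\<exists>y\<in>comp v. y \<otimes> y = \<one>)"
      proof
        assume ex: "\<exists>y\<in>comp v. y \<otimes> y = \<one>"
        hence "\<exists>y. y \<in> comp v \<and> y \<otimes> y = \<one>" by blast
        from someI_ex[OF this] ex have "D \<otimes> D = \<one>" by (simp add: D_def d_def)
        thus False using False by simp
      qed
      show ?thesis
      proof (cases "v \<otimes> v \<in> K")
        case True
        have "\<not> (\<exists>x\<in>V. v \<otimes> x \<in> K \<and> x \<otimes> x = \<one>)"
          using nosq by (auto simp: comp_def)
        hence c2: "card K \<le> 2" using hyp vV True by blast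
        have k1: "inv v \<otimes> D \<in> K"
        proof (cases "inv v \<otimes> D \<in> K")
          case False
          hence "v \<otimes> D \<in> K" using Dmem by blast
          moreover have "inv v \<otimes> D = (v \<otimes> D) \<otimes> inv (v \<otimes> v)" using vc by (simp add: inv_mult m_ac canc)
          ultimately show ?thesis using Ki Km True by metis
        qed simp
        have iDcomp: "inv D \<in> comp v" using F5[OF vV(1) Dcomp] .
        have k2: "inv v \<otimes> inv D \<in> K"
        proof (cases "inv v \<otimes> inv D \<in> K")
          case False
          hence "v \<otimes> inv D \<in> K" using iDcomp by (simp add: comp_def)
          moreover have "inv v \<otimes> inv D = (v \<otimes> inv D) \<otimes> inv (v \<otimes> v)" using vc by (simp add: inv_mult m_ac canc)
          ultimately show ?thesis using Ki Km True by metis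
        qed simp
        have k0: "\<one> \<in> K" using subgroup.one_closed[OF K] .
        have n1: "inv v \<otimes> D \<noteq> \<one>"
        proof
          assume "inv v \<otimes> D = \<one>" hence "D = v" using vc by (metis inv_closed inv_equality inv_inv)
          thus False using vnD by simp
        qed
        have n2: "inv v \<otimes> inv D \<noteq> \<one>"
        proof
          assume "inv v \<otimes> inv D = \<one>" hence "inv D = v" using vc by (metis inv_closed inv_equality inv_inv)
          thus False using vnD by simp
        qed
        have n3: "inv v \<otimes> D \<noteq> inv v \<otimes> inv D"
        proof
          assume "inv v \<otimes> D = inv v \<otimes> inv D" hence "D = inv D" using vc by (metis inv_closed l_cancel)
          hence "D \<otimes> D = \<one>" using vc by (metis r_inv)
          thus False using False by simp
        qed
        have "card {\<one>, inv v \<otimes> D, inv v \<otimes> inv D} \<le> card K"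
          by (rule card_mono[OF finK]) (use k0 k1 k2 in auto)
        moreover have "card {\<one>, inv v \<otimes> D, inv v \<otimes> inv D} = 3" using n1 n2 n3 by auto
        ultimately show ?thesis using c2 by simp
      next
        case nsp: False
        show ?thesis
        proof (cases "v \<otimes> D \<in> K")
          case True
          hence adj: "sum_adj G K v D" using vnD vDne by (simp add: sum_adj_def)
          have "\<not> sum_adj G K v (inv D)"
          proof
            assume "sum_adj G K v (inv D)"
            hence "v \<otimes> inv D \<in> K" by (simp add: sum_adj_def)
            moreover have "v \<otimes> v = (v \<otimes> D) \<otimes> (v \<otimes> inv D)" using vc by (simp add: m_ac canc)
            ultimately show False using nsp True Km by metis
          qed
          show ?thesis by (rule ex1I[OF DC(1) adj]) (use cand \<open>\<not> sum_adj G K v (inv D)\<close> in blast)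
        next
          case False
          hence "inv v \<otimes> D \<in> K" using Dmem by blast
          moreover have "v \<otimes> inv D = inv (inv v \<otimes> D)" using vc by (simp add: inv_mult m_ac)
          ultimately have "v \<otimes> inv D \<in> K" using Ki by metis
          hence adj: "sum_adj G K v (inv D)" using vnD vDine by (simp add: sum_adj_def)
          have "\<not> sum_adj G K v D" using False by (simp add: sum_adj_def)
          show ?thesis by (rule ex1I[OF DC(2) adj]) (use cand \<open>\<not> sum_adj G K v D\<close> in blast)
        qed
      qed
    qed
  qed
  have "perfect_code V (sum_adj G K) C"
    unfolding perfect_code_def using CV indep domi by blast
  thus ?thesis by blast
qed
end


lemma pow_card_sub:
  assumes "comm_group G" "subgroup P G" "x \<in> P"
  shows "x [^]\<^bsub>G\<^esub> card P = \<one>\<^bsub>G\<^esub>"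
proof -
  interpret comm_group G by fact
  have gP: "group (G\<lparr>carrier := P\<rparr>)" using subgroup.subgroup_is_group[OF assms(2) is_group] .
  have "x [^]\<^bsub>G\<lparr>carrier := P\<rparr>\<^esub> order (G\<lparr>carrier := P\<rparr>) = \<one>\<^bsub>G\<lparr>carrier := P\<rparr>\<^esub>"
    using group.pow_order_eq_1[OF gP] assms(3) by simp
  thus ?thesis using nat_pow_consistent[of x "card P" P] by (simp add: order_def)
qed

theorem proposition3p4:
  fixes G :: "('a, 'b) monoid_scheme" and H A2 H2 :: "'a set"
  assumes "comm_group G"
    and "finite (carrier G)"
    and "subgroup H G"
    and "sylow_subgroup G 2 (carrier G) A2"
    and "sylow_subgroup G 2 H H2"
    and "sum_graph_has_perfect_code G (carrier G) H"
  shows "sum_graph_has_perfect_code G A2 H2"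
proof -
  interpret comm_group G by fact
  have A2: "subgroup A2 G" "card A2 = 2 ^ multiplicity 2 (card (carrier G))"
    using assms(4) by (auto simp: sylow_subgroup_def)
  have H2: "subgroup H2 G" "H2 \<subseteq> H" "card H2 = 2 ^ multiplicity 2 (card H)"
    using assms(5) by (auto simp: sylow_subgroup_def)
  have finH: "finite H" using assms(2) subgroup.subset[OF assms(3)] finite_subset by blast
  have finH2: "finite H2" using finH H2(2) finite_subset by blast
  have sG: "subgroup (carrier G) G" by (rule subgroup_self)
  have H2A2: "H2 \<subseteq> A2"
  proof
    fix h assume h: "h \<in> H2"
    have "h [^]\<^bsub>G\<^esub> (2 ^ multiplicity 2 (card H)::nat) = \<one>\<^bsub>G\<^esub>"
      using pow_card_sub[OF assms(1) H2(1) h] H2(3) by simp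
    moreover have "h \<in> carrier G" using subgroup.mem_carrier[OF H2(1) h] .
    ultimately show "h \<in> A2"
      using sylow_mem[OF assms(1) sG assms(2) A2(1) subgroup.subset[OF A2(1)] A2(2)] by simp
  qed
  obtain C0 where C0: "perfect_code (carrier G) (sum_adj G H) C0"
    using assms(6) by (auto simp: sum_graph_has_perfect_code_def)
  have hyp: "card H2 \<le> 2 \<or> (\<forall>a\<in>A2. a \<otimes>\<^bsub>G\<^esub> a \<in> H2 \<longrightarrow> (\<exists>x\<in>A2. a \<otimes>\<^bsub>G\<^esub> x \<in> H2 \<and> x \<otimes>\<^bsub>G\<^esub> x = \<one>\<^bsub>G\<^esub>))"
  proof (cases "card H2 \<le> 2")
    case False
    hence c3: "3 \<le> card H" using card_mono[OF finH H2(2)] by linarith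
    have "\<exists>x\<in>A2. a \<otimes>\<^bsub>G\<^esub> x \<in> H2 \<and> x \<otimes>\<^bsub>G\<^esub> x = \<one>\<^bsub>G\<^esub>" if a: "a \<in> A2" "a \<otimes>\<^bsub>G\<^esub> a \<in> H2" for a
    proof -
      have ac: "a \<in> carrier G" using subgroup.mem_carrier[OF A2(1) a(1)] .
      obtain x where x: "x \<in> carrier G" "a \<otimes>\<^bsub>G\<^esub> x \<in> H" "x \<otimes>\<^bsub>G\<^esub> x = \<one>\<^bsub>G\<^esub>"
        using nec[OF assms(3) C0 c3 ac] a(2) H2(2) by blast
      define e where "e = multiplicity 2 (card (carrier G))"
      define h where "h = a \<otimes>\<^bsub>G\<^esub> x"
      have hc: "h \<in> carrier G" using ac x by (simp add: h_def)
      have ae: "a [^]\<^bsub>G\<^esub> (2 ^ e :: nat) = \<one>\<^bsub>G\<^esub>"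
        using pow_card_sub[OF assms(1) A2(1) a(1)] A2(2) by (simp add: e_def)
      have hh: "h \<otimes>\<^bsub>G\<^esub> h = a \<otimes>\<^bsub>G\<^esub> a"
      proof -
        have "h \<otimes>\<^bsub>G\<^esub> h = (a \<otimes>\<^bsub>G\<^esub> a) \<otimes>\<^bsub>G\<^esub> (x \<otimes>\<^bsub>G\<^esub> x)" using ac x by (simp add: h_def m_ac)
        thus ?thesis using x ac by simp
      qed
      have "h [^]\<^bsub>G\<^esub> (2 ^ Suc e :: nat) = (h [^]\<^bsub>G\<^esub> (2::nat)) [^]\<^bsub>G\<^esub> (2 ^ e :: nat)"
        using hc by (simp add: nat_pow_pow)
      also have "h [^]\<^bsub>G\<^esub> (2::nat) = a \<otimes>\<^bsub>G\<^esub> a" using hh hc by (simp add: numeral_2_eq_2)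
      also have "(a \<otimes>\<^bsub>G\<^esub> a) [^]\<^bsub>G\<^esub> (2 ^ e :: nat) = a [^]\<^bsub>G\<^esub> (2 ^ e :: nat) \<otimes>\<^bsub>G\<^esub> a [^]\<^bsub>G\<^esub> (2 ^ e :: nat)"
        using ac by (simp add: pow_mult_distrib)
      also have "\<dots> = \<one>\<^bsub>G\<^esub>" using ae by simp
      finally have hp: "h [^]\<^bsub>G\<^esub> (2 ^ Suc e :: nat) = \<one>\<^bsub>G\<^esub>" .
      have hH2: "h \<in> H2"
        using sylow_mem[OF assms(1) assms(3) finH H2(1) H2(2) H2(3) _ hp] x(2) by (simp add: h_def)
      have xeq: "x = inv\<^bsub>G\<^esub> a \<otimes>\<^bsub>G\<^esub> h" using ac x by (simp add: h_def m_assoc[symmetric])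
      have "x \<in> A2" unfolding xeq
        using subgroup.m_closed[OF A2(1) subgroup.m_inv_closed[OF A2(1) a(1)]] hH2 H2A2 by blast
      thus ?thesis using hH2 x(3) by (auto simp: h_def)
    qed
    thus ?thesis by blast
  qed simp
  show ?thesis
    using suff[OF A2(1) H2(1) finH2 hyp] by (simp add: sum_graph_has_perfect_code_def)
qed

end
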